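(* Let $G$ be a connected graph on at least three vertices that has no pair of open twins of degree $1$ (i.e., no two distinct leaves adjacent to the same vertex). Then $G$ admits a minimum-size locating-dominating set $S$ containing no leaf of $G$.
   Context: All graphs are finite and simple. For a vertex $v$, $N(v)$ is its open neighbourhood and $N[v]=N(v)\cup\{v\}$. For $S\subseteq V(G)$, $I(v)=N[v]\cap S$. A set $S\subseteq V(G)$ is locating-dominating if every vertex $v$ has $I(v)\neq\emptyset$ and $I(u)\neq I(v)$ for all distinct $u,v\in V(G)\setminus S$. Two distinct vertices $u,v$ are open twins if $N(u)=N(v)$; they are open twins of degree $d$ if moreover $|N(u)|=d$. A leaf is a vertex of degree $1$. *)

theory Defs
  imports Main
begin

definition simple_graph :: "'a set \<Rightarrow> ('a \<Rightarrow> 'a \<Rightarrow> bool) \<Rightarrow> bool" where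
  "simple_graph V E \<longleftrightarrow> finite V \<and> (\<forall>u v. E u v \<longrightarrow> E v u) \<and> (\<forall>v. \<not> E v v)
     \<and> (\<forall>u v. E u v \<longrightarrow> u \<in> V \<and> v \<in> V)"

definition connected_graph :: "'a set \<Rightarrow> ('a \<Rightarrow> 'a \<Rightarrow> bool) \<Rightarrow> bool" where
  "connected_graph V E \<longleftrightarrow> V \<noteq> {} \<and> (\<forall>u\<in>V. \<forall>v\<in>V. E\<^sup>*\<^sup>* u v)"

definition open_nbhd :: "'a set \<Rightarrow> ('a \<Rightarrow> 'a \<Rightarrow> bool) \<Rightarrow> 'a \<Rightarrow> 'a set" where
  "open_nbhd V E v = {u \<in> V. E v u}"

definition closed_nbhd :: "'a set \<Rightarrow> ('a \<Rightarrow> 'a \<Rightarrow> bool) \<Rightarrow> 'a \<Rightarrow> 'a set" where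
  "closed_nbhd V E v = insert v (open_nbhd V E v)"

definition is_leaf :: "'a set \<Rightarrow> ('a \<Rightarrow> 'a \<Rightarrow> bool) \<Rightarrow> 'a \<Rightarrow> bool" where
  "is_leaf V E v \<longleftrightarrow> v \<in> V \<and> card (open_nbhd V E v) = 1"

definition open_twins_deg :: "'a set \<Rightarrow> ('a \<Rightarrow> 'a \<Rightarrow> bool) \<Rightarrow> nat \<Rightarrow> 'a \<Rightarrow> 'a \<Rightarrow> bool" where
  "open_twins_deg V E d u v \<longleftrightarrow> u \<in> V \<and> v \<in> V \<and> u \<noteq> v
     \<and> open_nbhd V E u = open_nbhd V E v \<and> card (open_nbhd V E u) = d"

definition I_set :: "'a set \<Rightarrow> ('a \<Rightarrow> 'a \<Rightarrow> bool) \<Rightarrow> 'a set \<Rightarrow> 'a \<Rightarrow> 'a set" where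
  "I_set V E S v = closed_nbhd V E v \<inter> S"

definition locating_dominating :: "'a set \<Rightarrow> ('a \<Rightarrow> 'a \<Rightarrow> bool) \<Rightarrow> 'a set \<Rightarrow> bool" where
  "locating_dominating V E S \<longleftrightarrow> S \<subseteq> V
     \<and> (\<forall>v\<in>V. I_set V E S v \<noteq> {})
     \<and> (\<forall>u\<in>V - S. \<forall>v\<in>V - S. u \<noteq> v \<longrightarrow> I_set V E S u \<noteq> I_set V E S v)"

definition min_locating_dominating :: "'a set \<Rightarrow> ('a \<Rightarrow> 'a \<Rightarrow> bool) \<Rightarrow> 'a set \<Rightarrow> bool" where
  "min_locating_dominating V E S \<longleftrightarrow> locating_dominating V E S
     \<and> (\<forall>T. locating_dominating V E T \<longrightarrow> card S \<le> card T)"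

end

theory Submission
  imports Defs
begin

lemma I_set_eq: "I_set V E S y = {z \<in> S. z = y \<or> (z \<in> V \<and> E y z)}"
  unfolding I_set_def closed_nbhd_def open_nbhd_def by auto

lemma swap:
  assumes g: "simple_graph V E" and ld: "locating_dominating V E S" and lS: "l \<in> S"
    and Nl: "open_nbhd V E l = {u}" and wV: "w \<in> V" and wS: "w \<notin> S"
    and uw: "u \<in> S \<or> w = u"
    and H: "\<forall>y\<in>V-S. y \<noteq> w \<longrightarrow> I_set V E S y \<noteq> {u} \<inter> S"
  shows "locating_dominating V E (insert w (S - {l}))"
proof -
  let ?S' = "insert w (S - {l})"
  have sym: "\<And>a b. E a b \<Longrightarrow> E b a" and irr: "\<And>a. \<not> E a a"
    and inV: "\<And>a b. E a b \<Longrightarrow> a \<in> V \<and> b \<in> V"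
    using g unfolding simple_graph_def by blast+
  have SV: "S \<subseteq> V" using ld unfolding locating_dominating_def by blast
  have dom: "\<forall>v\<in>V. I_set V E S v \<noteq> {}" using ld unfolding locating_dominating_def by blast
  have sep: "\<forall>a\<in>V - S. \<forall>b\<in>V - S. a \<noteq> b \<longrightarrow> I_set V E S a \<noteq> I_set V E S b"
    using ld unfolding locating_dominating_def by blast
  have adj: "\<And>y. E y l \<Longrightarrow> y = u"
  proof -
    fix y assume "E y l"
    then have "y \<in> open_nbhd V E l" using sym inV unfolding open_nbhd_def by blast
    then show "y = u" using Nl by blast
  qed
  have Elu: "E l u" and uV: "u \<in> V" using Nl unfolding open_nbhd_def by blast+
  have ul: "u \<noteq> l" using Elu irr by blast
  have wl: "w \<noteq> l" using wS lS by blast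
  have IS': "\<And>y. y \<in> V - S \<Longrightarrow> y \<noteq> w \<Longrightarrow> I_set V E ?S' y \<inter> S = I_set V E S y"
  proof -
    fix y assume y: "y \<in> V - S" "y \<noteq> w"
    have "y \<noteq> u" using y uw by blast
    then have "\<not> E y l" using adj by blast
    then show "I_set V E ?S' y \<inter> S = I_set V E S y" using y wS unfolding I_set_eq by auto
  qed
  have Il: "I_set V E ?S' l = {u}"
  proof -
    have "u \<in> ?S'" using uw ul by blast
    moreover have "\<And>z. E l z \<Longrightarrow> z = u" using adj sym by blast
    ultimately show ?thesis using wl Elu uV unfolding I_set_eq by blast
  qed
  have "?S' \<subseteq> V" using SV wV by blast
  moreover have "\<forall>v\<in>V. I_set V E ?S' v \<noteq> {}"
  proof
    fix v assume v: "v \<in> V"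
    show "I_set V E ?S' v \<noteq> {}"
    proof (cases "v \<in> ?S'")
      case True then show ?thesis unfolding I_set_eq by blast
    next
      case False
      then have "v = l \<or> (v \<in> V - S \<and> v \<noteq> w)" using v by blast
      then show ?thesis
      proof
        assume "v = l" then show ?thesis using Il by simp
      next
        assume a: "v \<in> V - S \<and> v \<noteq> w"
        then show ?thesis using IS'[of v] dom v by auto
      qed
    qed
  qed
  moreover have "\<forall>a\<in>V - ?S'. \<forall>b\<in>V - ?S'. a \<noteq> b \<longrightarrow> I_set V E ?S' a \<noteq> I_set V E ?S' b"
  proof (intro ballI impI)
    fix a b assume a: "a \<in> V - ?S'" and b: "b \<in> V - ?S'" and ab: "a \<noteq> b"
    have la: "\<And>y. y \<in> V - S \<Longrightarrow> y \<noteq> w \<Longrightarrow> I_set V E ?S' l \<noteq> I_set V E ?S' y"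
    proof
      fix y assume y: "y \<in> V - S" "y \<noteq> w" and eq: "I_set V E ?S' l = I_set V E ?S' y"
      have "I_set V E S y = {u} \<inter> S" using IS'[OF y] eq Il by simp
      then show False using H y by blast
    qed
    consider "a = l" "b \<in> V - S" "b \<noteq> w" | "b = l" "a \<in> V - S" "a \<noteq> w"
      | "a \<in> V - S" "a \<noteq> w" "b \<in> V - S" "b \<noteq> w" using a b ab by blast
    then show "I_set V E ?S' a \<noteq> I_set V E ?S' b"
    proof cases
      case 1 then show ?thesis using la by blast
    next
      case 2 then show ?thesis using la by metis
    next
      case 3
      then have "I_set V E S a \<noteq> I_set V E S b" using sep ab by blast
      then show ?thesis using IS'[of a] IS'[of b] 3 by metis
    qed
  qed
  ultimately show ?thesis unfolding locating_dominating_def by blast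
qed

lemma remove:
  assumes g: "simple_graph V E" and ld: "locating_dominating V E S" and lS: "l \<in> S"
    and Nl: "open_nbhd V E l = {u}" and uS: "u \<in> S"
    and H: "\<forall>y\<in>V-S. I_set V E S y \<noteq> {u}"
  shows "locating_dominating V E (S - {l})"
proof -
  let ?S' = "S - {l}"
  have sym: "\<And>a b. E a b \<Longrightarrow> E b a" and irr: "\<And>a. \<not> E a a"
    and inV: "\<And>a b. E a b \<Longrightarrow> a \<in> V \<and> b \<in> V"
    using g unfolding simple_graph_def by blast+
  have SV: "S \<subseteq> V" using ld unfolding locating_dominating_def by blast
  have dom: "\<forall>v\<in>V. I_set V E S v \<noteq> {}" using ld unfolding locating_dominating_def by blast
  have sep: "\<forall>a\<in>V - S. \<forall>b\<in>V - S. a \<noteq> b \<longrightarrow> I_set V E S a \<noteq> I_set V E S b"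
    using ld unfolding locating_dominating_def by blast
  have adj: "\<And>y. E y l \<Longrightarrow> y = u"
  proof -
    fix y assume "E y l"
    then have "y \<in> open_nbhd V E l" using sym inV unfolding open_nbhd_def by blast
    then show "y = u" using Nl by blast
  qed
  have Elu: "E l u" and uV: "u \<in> V" using Nl unfolding open_nbhd_def by blast+
  have ul: "u \<noteq> l" using Elu irr by blast
  have IS': "\<And>y. y \<in> V - S \<Longrightarrow> I_set V E ?S' y = I_set V E S y"
  proof -
    fix y assume y: "y \<in> V - S"
    have "y \<noteq> u" using y uS by blast
    then have "\<not> E y l" using adj by blast
    then show "I_set V E ?S' y = I_set V E S y" using y lS unfolding I_set_eq by auto
  qed
  have Il: "I_set V E ?S' l = {u}"
  proof -
    have "\<And>z. E l z \<Longrightarrow> z = u" using adj sym by blast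
    then show ?thesis using ul uS Elu uV unfolding I_set_eq by blast
  qed
  have "?S' \<subseteq> V" using SV by blast
  moreover have "\<forall>v\<in>V. I_set V E ?S' v \<noteq> {}"
  proof
    fix v assume v: "v \<in> V"
    show "I_set V E ?S' v \<noteq> {}"
    proof (cases "v \<in> ?S'")
      case True then show ?thesis unfolding I_set_eq by blast
    next
      case False
      then have "v = l \<or> v \<in> V - S" using v by blast
      then show ?thesis using Il IS'[of v] dom v by auto
    qed
  qed
  moreover have "\<forall>a\<in>V - ?S'. \<forall>b\<in>V - ?S'. a \<noteq> b \<longrightarrow> I_set V E ?S' a \<noteq> I_set V E ?S' b"
  proof (intro ballI impI)
    fix a b assume a: "a \<in> V - ?S'" and b: "b \<in> V - ?S'" and ab: "a \<noteq> b"
    consider "a = l" "b \<in> V - S" | "b = l" "a \<in> V - S"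
      | "a \<in> V - S" "b \<in> V - S" using a b ab by blast
    then show "I_set V E ?S' a \<noteq> I_set V E ?S' b"
    proof cases
      case 1 then show ?thesis using Il IS'[of b] H by auto
    next
      case 2 then show ?thesis using Il IS'[of a] H by auto
    next
      case 3
      then show ?thesis using IS'[of a] IS'[of b] sep ab by auto
    qed
  qed
  ultimately show ?thesis unfolding locating_dominating_def by blast
qed

lemma support_not_leaf:
  assumes g: "simple_graph V E" and c: "connected_graph V E" and V3: "card V \<ge> 3"
    and lV: "l \<in> V" and Nl: "open_nbhd V E l = {u}"
  shows "\<not> is_leaf V E u"
proof
  assume lf: "is_leaf V E u"
  have sym: "\<And>a b. E a b \<Longrightarrow> E b a" and inV: "\<And>a b. E a b \<Longrightarrow> a \<in> V \<and> b \<in> V"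
    and fin: "finite V"
    using g unfolding simple_graph_def by blast+
  have Elu: "E l u" using Nl unfolding open_nbhd_def by blast
  have "l \<in> open_nbhd V E u" using Elu sym lV unfolding open_nbhd_def by blast
  moreover obtain x where "open_nbhd V E u = {x}" using lf unfolding is_leaf_def
    by (meson card_1_singletonE)
  ultimately have Nu: "open_nbhd V E u = {l}" by auto
  have cl: "\<And>a b. E a b \<Longrightarrow> a \<in> {l, u} \<Longrightarrow> b \<in> {l, u}"
    using Nl Nu inV unfolding open_nbhd_def by blast
  have reach: "\<And>b. E\<^sup>*\<^sup>* l b \<Longrightarrow> b \<in> {l, u}"
  proof -
    fix b assume "E\<^sup>*\<^sup>* l b"
    then show "b \<in> {l, u}"
      by (induction rule: rtranclp_induct) (auto dest: cl)
  qed
  have "V \<subseteq> {l, u}" using c lV reach unfolding connected_graph_def by blast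
  then have "card V \<le> card {l, u}" by (simp add: card_mono)
  also have "\<dots> \<le> 2" by (simp add: card_insert_le_m1)
  finally show False using V3 by simp
qed

theorem lemma2:
  fixes V :: "'a set" and E :: "'a \<Rightarrow> 'a \<Rightarrow> bool"
  assumes "simple_graph V E"
    and "connected_graph V E"
    and "card V \<ge> 3"
    and "\<not> (\<exists>u v. open_twins_deg V E 1 u v)"
  shows "\<exists>S. min_locating_dominating V E S \<and> (\<forall>v\<in>S. \<not> is_leaf V E v)"
proof -
  have fin: "finite V" using assms(1) unfolding simple_graph_def by blast
  have "locating_dominating V E V" unfolding locating_dominating_def I_set_eq by auto
  then obtain S0 where S0: "locating_dominating V E S0"
    "\<forall>T. locating_dominating V E T \<longrightarrow> card S0 \<le> card T"
    using ex_has_least_nat[of "locating_dominating V E" V card] by blast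
  then have "min_locating_dominating V E S0" unfolding min_locating_dominating_def by blast
  then obtain S where S: "min_locating_dominating V E S"
    and Smin: "\<forall>T. min_locating_dominating V E T \<longrightarrow>
       card {v\<in>S. is_leaf V E v} \<le> card {v\<in>T. is_leaf V E v}"
    using ex_has_least_nat[of "min_locating_dominating V E" S0 "\<lambda>S. card {v\<in>S. is_leaf V E v}"]
    by blast
  have ld: "locating_dominating V E S" and cmin: "\<forall>T. locating_dominating V E T \<longrightarrow> card S \<le> card T"
    using S unfolding min_locating_dominating_def by blast+
  have SV: "S \<subseteq> V" using ld unfolding locating_dominating_def by blast
  have finS: "finite S" using SV fin finite_subset by blast
  have "\<forall>v\<in>S. \<not> is_leaf V E v"
  proof (rule ccontr)
    assume "\<not> (\<forall>v\<in>S. \<not> is_leaf V E v)"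
    then obtain l where lS: "l \<in> S" and ll: "is_leaf V E l" by blast
    obtain u where Nl: "open_nbhd V E l = {u}" using ll unfolding is_leaf_def
      by (meson card_1_singletonE)
    have lV: "l \<in> V" using ll unfolding is_leaf_def by blast
    have uV: "u \<in> V" using Nl unfolding open_nbhd_def by blast
    have unl: "\<not> is_leaf V E u" using support_not_leaf[OF assms(1-3) lV Nl] .
    have dom: "\<forall>v\<in>V. I_set V E S v \<noteq> {}" using ld unfolding locating_dominating_def by blast
    have sep: "\<forall>a\<in>V - S. \<forall>b\<in>V - S. a \<noteq> b \<longrightarrow> I_set V E S a \<noteq> I_set V E S b"
      using ld unfolding locating_dominating_def by blast
    have "\<exists>w. w \<in> V \<and> w \<notin> S \<and> (u \<in> S \<or> w = u) \<and> \<not> is_leaf V E w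
        \<and> (\<forall>y\<in>V-S. y \<noteq> w \<longrightarrow> I_set V E S y \<noteq> {u} \<inter> S)"
    proof (cases "u \<in> S")
      case False
      then show ?thesis using uV unl dom by auto
    next
      case True
      show ?thesis
      proof (cases "\<exists>x\<in>V-S. I_set V E S x = {u}")
        case False
        have H0: "\<forall>y\<in>V-S. I_set V E S y \<noteq> {u}" using False by simp
        have c1: "locating_dominating V E (S - {l})" by (rule remove[OF assms(1) ld lS Nl True H0])
        have c2: "card (S - {l}) < card S" by (rule card_Diff1_less[OF finS lS])
        have "card S \<le> card (S - {l})" using cmin c1 by blast
        then have False using c2 by simp
        then show ?thesis by blast
      next
        case ex: True
        then obtain x where x: "x \<in> V - S" "I_set V E S x = {u}" by blast
        have "\<not> is_leaf V E x"
        proof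
          assume lx: "is_leaf V E x"
          have um: "u \<in> I_set V E S x" using x(2) by simp
          have ux: "u \<noteq> x" using True x(1) by blast
          have "E x u" using um ux unfolding I_set_eq by blast
          then have "u \<in> open_nbhd V E x" using uV unfolding open_nbhd_def by blast
          moreover obtain z where "open_nbhd V E x = {z}" using lx unfolding is_leaf_def
            by (meson card_1_singletonE)
          ultimately have "open_nbhd V E x = {u}" by auto
          then have "open_twins_deg V E 1 l x" using lV x lS Nl unfolding open_twins_deg_def by auto
          then show False using assms(4) by blast
        qed
        moreover have "\<forall>y\<in>V-S. y \<noteq> x \<longrightarrow> I_set V E S y \<noteq> {u} \<inter> S"
        proof (intro ballI impI)
          fix y assume y: "y \<in> V - S" "y \<noteq> x"
          have "I_set V E S y \<noteq> I_set V E S x" using sep y x(1) by blast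
          then show "I_set V E S y \<noteq> {u} \<inter> S" using x(2) True by simp
        qed
        ultimately show ?thesis using x True by blast
      qed
    qed
    then obtain w where w: "w \<in> V" "w \<notin> S" "u \<in> S \<or> w = u" "\<not> is_leaf V E w"
      "\<forall>y\<in>V-S. y \<noteq> w \<longrightarrow> I_set V E S y \<noteq> {u} \<inter> S" by blast
    let ?S' = "insert w (S - {l})"
    have ld': "locating_dominating V E ?S'" using swap[OF assms(1) ld lS Nl w(1,2,3,5)] .
    have "card S > 0" using finS lS card_gt_0_iff by blast
    then have "card ?S' = card S" using finS lS w(2) by simp
    then have "min_locating_dominating V E ?S'" using ld' cmin unfolding min_locating_dominating_def by simp
    then have le: "card {v\<in>S. is_leaf V E v} \<le> card {v\<in>?S'. is_leaf V E v}" using Smin by blast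
    have "{v\<in>?S'. is_leaf V E v} = {v\<in>S. is_leaf V E v} - {l}" using w(4) by auto
    moreover have "card ({v\<in>S. is_leaf V E v} - {l}) < card {v\<in>S. is_leaf V E v}"
      using finS lS ll by (intro card_Diff1_less) auto
    ultimately show False using le by simp
  qed
  then show ?thesis using S by blast
qed

end
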